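(* Let $R$ be a commutative ring and let $f,g\in R[[x]]$ be formal power series. For an integer $m\ge1$ write $\ell(m)=\lfloor\log_2 m\rfloor$. Then $$f(x)g(x)=\frac{f(x)\odot g(x)}{1-x}-\sum_{m=1}^{\infty}\frac{1-x^{2^{\ell(m)}}}{(1-x)\,x^m}\,U_m(x)\,V_m(x),$$ where $$U_m(x)=\Bigl(\frac{x^m}{1-x^{2^{\ell(m)+1}}}\Bigr)\odot\Bigl(\bigl(1-x^{2^{\ell(m)}}\bigr)f(x)\Bigr),\qquad V_m(x)=\Bigl(\frac{x^m}{1-x^{2^{\ell(m)+1}}}\Bigr)\odot\Bigl(\bigl(1-x^{2^{\ell(m)}}\bigr)g(x)\Bigr).$$
   Context: For formal power series $P=\sum_i p_ix^i$ and $Q=\sum_i q_ix^i$, the termwise product is $P\odot Q=\sum_i p_iq_ix^i$. Fractions such as $\frac{1}{1-x^{N}}=\sum_{i\ge0}x^{iN}$ are understood in $R[[x]]$; the division by $x^m$ is exact since $U_m,V_m$ are divisible by $x^m$, and the infinite sum converges formally (the $m$-th summand has order at least $m$). *)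

theory Defs
  imports "HOL-Computational_Algebra.Formal_Power_Series" "HOL-Library.Discrete_Functions"
begin

definition fps_hadamard :: "'a::times fps \<Rightarrow> 'a fps \<Rightarrow> 'a fps" where
  "fps_hadamard P Q = Abs_fps (\<lambda>i. fps_nth P i * fps_nth Q i)"

text \<open>The series 1/(1 - x^N) = sum over i of x^(i*N), as in the paper's convention.\<close>
definition fps_geom :: "nat \<Rightarrow> 'a::{zero,one} fps" where
  "fps_geom N = Abs_fps (\<lambda>i. if N dvd i then 1 else 0)"

abbreviation ell :: "nat \<Rightarrow> nat" where
  "ell m \<equiv> floor_log m"

definition U_ser :: "nat \<Rightarrow> 'a::comm_ring_1 fps \<Rightarrow> 'a fps" where
  "U_ser m f = fps_hadamard (fps_X ^ m * fps_geom (2 ^ (ell m + 1)))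
                            ((1 - fps_X ^ (2 ^ ell m)) * f)"

text \<open>The m-th summand (1 - x^(2^l(m))) / ((1-x) x^m) * U_m * V_m; the division by x^m is
  exact and realised by fps_shift, and 1/(1-x) is fps_geom 1.\<close>
definition summand :: "'a::comm_ring_1 fps \<Rightarrow> 'a fps \<Rightarrow> nat \<Rightarrow> 'a fps" where
  "summand f g m = (1 - fps_X ^ (2 ^ ell m)) * fps_geom 1 * fps_shift m (U_ser m f * U_ser m g)"

end

theory Submission
  imports Defs
begin
unbundle fps_syntax

definition Pr :: "nat \<Rightarrow> nat \<Rightarrow> 'a::comm_ring_1 fps \<Rightarrow> 'a fps" where
  "Pr M r h = Abs_fps (\<lambda>k. if k mod M = r then h $ k else 0)"

definition low :: "nat \<Rightarrow> 'a::comm_ring_1 fps \<Rightarrow> bool" where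
  "low n H \<longleftrightarrow> (\<forall>k<n. H $ k = 0)"

lemma low_Pr: "low r (Pr M r h)"
  unfolding low_def Pr_def
proof (intro allI impI)
  fix k assume "k < r"
  moreover have "k mod M \<le> k" by (rule mod_less_eq_dividend)
  ultimately have "k mod M \<noteq> r" by linarith
  then show "Abs_fps (\<lambda>k. if k mod M = r then h $ k else 0) $ k = 0" by simp
qed

lemma low_mult: "low a F \<Longrightarrow> low b G \<Longrightarrow> low (a+b) (F*G)"
  unfolding low_def fps_mult_nth
proof (intro allI impI sum.neutral ballI)
  fix k i assume k: "k < a + b" and i: "i \<in> {0..k}" and F: "\<forall>k<a. F $ k = 0" and G: "\<forall>k<b. G $ k = 0"
  show "F $ i * G $ (k - i) = 0"
  proof (cases "i < a")
    case True then show ?thesis using F by simp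
  next
    case False then have "k - i < b" using k i by auto
    then show ?thesis using G by simp
  qed
qed

lemma low_add: "low a F \<Longrightarrow> low a G \<Longrightarrow> low a (F+G)"
  unfolding low_def by auto
lemma low_diff: "low a F \<Longrightarrow> low a G \<Longrightarrow> low a (F-G)"
  unfolding low_def by auto
lemma low_mono: "low a F \<Longrightarrow> b \<le> a \<Longrightarrow> low b F"
  unfolding low_def by auto
lemma low_0: "low 0 F"
  unfolding low_def by auto
lemma low_X: "low a F \<Longrightarrow> low (a+L) (fps_X^L * F)"
  unfolding low_def by (auto simp: fps_X_power_mult_nth)
lemma low_Xp: "low L (fps_X^L :: 'a::comm_ring_1 fps)"
  unfolding low_def by auto
lemma low_shift: "low (a+n) F \<Longrightarrow> low a (fps_shift n F)"
  unfolding low_def by auto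

lemma shift_X: "low n H \<Longrightarrow> fps_X^n * fps_shift n H = H"
  unfolding low_def by (intro fps_ext) (simp add: fps_X_power_mult_nth)

lemma X_cancel: "fps_X^n * A = fps_X^n * (B::'a::comm_ring_1 fps) \<Longrightarrow> A = B"
  by (metis fps_shift_times_fps_X_power' mult.commute)

lemma mod2L_cases: "(k::nat) mod (2*L) = k mod L \<or> k mod (2*L) = k mod L + L"
proof -
  have "k mod (L*2) = L * (k div L mod 2) + k mod L" by (rule mod_mult2_eq)
  moreover have "k div L mod 2 = 0 \<or> k div L mod 2 = 1" by auto
  ultimately show ?thesis by (auto simp: mult.commute)
qed

lemma mod2L: "(0::nat) < L \<Longrightarrow> r < L \<Longrightarrow> (k mod L = r) \<longleftrightarrow> (k mod (2*L) = r \<or> k mod (2*L) = r + L)"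
proof -
  assume L: "0 < L" "r < L"
  have b: "k mod L < L" using L by simp
  show ?thesis using mod2L_cases[of k L] b L by linarith
qed

lemma Pr_split: "0 < L \<Longrightarrow> r < L \<Longrightarrow> Pr L r f = Pr (2*L) r f + Pr (2*L) (r+L) f"
proof (intro fps_ext)
  fix k assume L: "0 < L" "r < L"
  have m: "(k mod L = r) \<longleftrightarrow> (k mod (2*L) = r \<or> k mod (2*L) = r + L)" by (rule mod2L[OF L])
  have d: "r \<noteq> r + L" using L by simp
  show "Pr L r f $ k = (Pr (2*L) r f + Pr (2*L) (r+L) f) $ k"
    unfolding Pr_def using m d by (cases "k mod (2*L) = r") auto
qed


lemma modeq: assumes "(m::nat) < M" shows "(m \<le> i \<and> M dvd (i - m)) \<longleftrightarrow> i mod M = m"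
proof
  assume h: "m \<le> i \<and> M dvd (i - m)"
  then obtain q where "i - m = M * q" by (auto elim: dvdE)
  then have "i = m + M * q" using h by simp
  then show "i mod M = m" using assms by simp
next
  assume h: "i mod M = m"
  have "M * (i div M) + i mod M = i" by (rule mult_div_mod_eq)
  then have "i = M * (i div M) + m" using h by simp
  then have "m \<le> i" and "i - m = M * (i div M)" by linarith+
  then show "m \<le> i \<and> M dvd (i - m)" by simp
qed

lemma U_eq:
  fixes f :: "'a::comm_ring_1 fps"
  assumes "2^k \<le> m" "m < 2*2^k"
  shows "U_ser m f = Pr (2*2^k) m ((1 - fps_X^(2^k)) * f)"
proof -
  have m0: "m > 0" using assms(1) by (metis not_gr_zero not_less pos2 zero_less_power)
  have ell: "ell m = k" by (rule floor_log_eqI) (use assms m0 in auto)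
  show ?thesis
    unfolding U_ser_def fps_hadamard_def Pr_def ell fps_geom_def
    by (intro fps_ext) (auto simp: fps_X_power_mult_nth modeq[OF assms(2), symmetric])
qed

lemma shiftmod: assumes "(r::nat) < L" shows "((a+L) mod (2*L) = r+L) \<longleftrightarrow> (a mod (2*L) = r)"
proof -
  define s where "s = a mod (2*L)"
  have sb: "s < 2*L" using assms unfolding s_def by simp
  have "(a+L) mod (2*L) = (s + L) mod (2*L)" unfolding s_def by (simp add: mod_add_left_eq)
  show ?thesis
  proof (cases "s < L")
    case True
    then have "(s + L) mod (2*L) = s + L" by simp
    then show ?thesis using \<open>(a+L) mod (2*L) = (s + L) mod (2*L)\<close> s_def by simp
  next
    case False
    then have "(s + L) mod (2*L) = (s + L - 2*L) mod (2*L)" by (simp add: le_mod_geq)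
    also have "\<dots> = s + L - 2*L" using sb by simp
    finally have "(a+L) mod (2*L) = s + L - 2*L" using \<open>(a+L) mod (2*L) = (s + L) mod (2*L)\<close> by simp
    moreover have "s + L - 2*L \<noteq> r + L" using sb by linarith
    moreover have "s \<noteq> r" using False assms by linarith
    ultimately show ?thesis unfolding s_def by simp
  qed
qed

lemma Pr_shiftX:
  fixes f :: "'a::comm_ring_1 fps"
  assumes "0 < L" "r < L"
  shows "Pr (2*L) (r+L) ((1 - fps_X^L) * f) = Pr (2*L) (r+L) f - fps_X^L * Pr (2*L) r f"
proof (intro fps_ext)
  fix k
  have e: "(1 - fps_X^L) * f = f - fps_X^L * f" by (simp add: algebra_simps)
  show "Pr (2*L) (r+L) ((1 - fps_X^L) * f) $ k = (Pr (2*L) (r+L) f - fps_X^L * Pr (2*L) r f) $ k"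
  proof (cases "k < L")
    case True
    have "k mod (2*L) \<le> k" by (rule mod_less_eq_dividend)
    then have "k mod (2*L) \<noteq> r + L" using True by linarith
    then show ?thesis unfolding Pr_def e using True by (simp add: fps_X_power_mult_nth)
  next
    case False
    then have kk: "k = (k - L) + L" by simp
    have iff: "(k mod (2*L) = r+L) \<longleftrightarrow> ((k - L) mod (2*L) = r)"
      using shiftmod[OF assms(2), of "k - L"] kk by simp
    show ?thesis unfolding Pr_def e using False iff by (simp add: fps_X_power_mult_nth)
  qed
qed

lemma key:
  fixes F0 F1 G0 G1 :: "'a::comm_ring_1 fps"
  assumes l: "low r F0" "low r G0" "low (r+L) F1" "low (r+L) G1"
  shows "fps_shift (r+L) ((F1 - fps_X^L*F0)*(G1 - fps_X^L*G0)) =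
     (1+fps_X^L)*(fps_shift r (F0*G0) + fps_shift (r+L) (F1*G1)) - fps_shift r ((F0+F1)*(G0+G1))"
proof (rule X_cancel[of "r+L"])
  have a: "low (r+L) (F1 - fps_X^L*F0)" by (rule low_diff[OF l(3)]) (use low_X[OF l(1), of L] in simp)
  have b: "low (r+L) (G1 - fps_X^L*G0)" by (rule low_diff[OF l(4)]) (use low_X[OF l(2), of L] in simp)
  have P: "low (r+L) ((F1 - fps_X^L*F0)*(G1 - fps_X^L*G0))"
    using low_mono[OF low_mult[OF a b]] by simp
  have e1: "fps_X^r * fps_shift r (F0*G0) = F0*G0"
    by (rule shift_X) (use low_mono[OF low_mult[OF l(1) l(2)]] in simp)
  have e2: "fps_X^(r+L) * fps_shift (r+L) (F1*G1) = F1*G1"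
    by (rule shift_X) (use low_mono[OF low_mult[OF l(3) l(4)]] in simp)
  have l1: "low r F1" using low_mono[OF l(3)] by simp
  have l2: "low r G1" using low_mono[OF l(4)] by simp
  have e3: "fps_X^r * fps_shift r ((F0+F1)*(G0+G1)) = (F0+F1)*(G0+G1)"
    by (rule shift_X) (use low_mono[OF low_mult[OF low_add[OF l(1) l1] low_add[OF l(2) l2]]] in simp)
  have "fps_X^(r+L) * ((1+fps_X^L)*(fps_shift r (F0*G0) + fps_shift (r+L) (F1*G1)) - fps_shift r ((F0+F1)*(G0+G1)))
     = (1+fps_X^L)*(fps_X^L*(fps_X^r * fps_shift r (F0*G0)) + fps_X^(r+L) * fps_shift (r+L) (F1*G1))
        - fps_X^L*(fps_X^r * fps_shift r ((F0+F1)*(G0+G1)))"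
    by (simp add: power_add algebra_simps)
  also have "\<dots> = (1+fps_X^L)*(fps_X^L*(F0*G0) + F1*G1) - fps_X^L*((F0+F1)*(G0+G1))"
    by (simp only: e1 e2 e3)
  also have "\<dots> = (F1 - fps_X^L*F0)*(G1 - fps_X^L*G0)"
    by (simp add: algebra_simps)
  also have "\<dots> = fps_X^(r+L) * fps_shift (r+L) ((F1 - fps_X^L*F0)*(G1 - fps_X^L*G0))"
    by (rule shift_X[OF P, symmetric])
  finally show "fps_X^(r+L) * fps_shift (r+L) ((F1 - fps_X^L*F0)*(G1 - fps_X^L*G0)) =
     fps_X^(r+L) * ((1+fps_X^L)*(fps_shift r (F0*G0) + fps_shift (r+L) (F1*G1)) - fps_shift r ((F0+F1)*(G0+G1)))"
    by simp
qed


definition W :: "nat \<Rightarrow> 'a::comm_ring_1 fps \<Rightarrow> 'a fps \<Rightarrow> 'a fps" where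
  "W M f g = (1 - fps_X^M) * fps_geom 1 * (\<Sum>r<M. fps_shift r (Pr M r f * Pr M r g))"

lemma sum_split2: "(\<Sum>r<2*L. (T::nat \<Rightarrow> 'b::comm_monoid_add) r) = (\<Sum>r<L. T r) + (\<Sum>r<L. T (r+L))"
proof -
  have "(\<Sum>r<2*L. T r) = (\<Sum>r\<in>{0..<L}. T r) + (\<Sum>r\<in>{L..<2*L}. T r)"
    by (simp add: sum.atLeastLessThan_concat atLeast0LessThan[symmetric])
  also have "(\<Sum>r\<in>{L..<2*L}. T r) = (\<Sum>r\<in>{0+L..<L+L}. T r)" by (simp add: mult_2)
  also have "\<dots> = (\<Sum>r\<in>{0..<L}. T (r+L))" by (rule sum.shift_bounds_nat_ivl)
  finally show ?thesis by (simp add: atLeast0LessThan)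
qed

lemma level:
  fixes f g :: "'a::comm_ring_1 fps"
  assumes L: "L = 2^k"
  shows "(\<Sum>m\<in>{L..<2*L}. summand f g m) = W (2*L) f g - W L f g"
proof -
  have L0: "0 < L" using L by simp
  define T0 where "T0 r = fps_shift r (Pr (2*L) r f * Pr (2*L) r g)" for r
  define T1 where "T1 r = fps_shift (r+L) (Pr (2*L) (r+L) f * Pr (2*L) (r+L) g)" for r
  define D where "D r = fps_shift r (Pr L r f * Pr L r g)" for r
  define C where "C = (1 - fps_X^L) * (fps_geom 1 :: 'a fps)"
  have s: "summand f g (r+L) = C * ((1+fps_X^L)*(T0 r + T1 r) - D r)" if r: "r < L" for r
  proof -
    have b1: "2^k \<le> r + L" "r + L < 2*2^k" using r L by auto
    have ell: "ell (r+L) = k" by (rule floor_log_eqI) (use b1 in auto)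
    have Uf: "U_ser (r+L) f = Pr (2*L) (r+L) f - fps_X^L * Pr (2*L) r f"
      using U_eq[OF b1, of f] Pr_shiftX[OF L0 r, of f] L by simp
    have Ug: "U_ser (r+L) g = Pr (2*L) (r+L) g - fps_X^L * Pr (2*L) r g"
      using U_eq[OF b1, of g] Pr_shiftX[OF L0 r, of g] L by simp
    have kk: "fps_shift (r+L) (U_ser (r+L) f * U_ser (r+L) g) = (1+fps_X^L)*(T0 r + T1 r) - D r"
      unfolding Uf Ug T0_def T1_def D_def Pr_split[OF L0 r, of f] Pr_split[OF L0 r, of g]
      by (rule key) (rule low_mono[OF low_Pr], simp)+
    show ?thesis unfolding summand_def ell kk C_def L[symmetric] by (simp add: mult.assoc)
  qed
  have "(\<Sum>m\<in>{L..<2*L}. summand f g m) = (\<Sum>m\<in>{0+L..<L+L}. summand f g m)" by (simp add: mult_2)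
  also have "\<dots> = (\<Sum>r\<in>{0..<L}. summand f g (r+L))" by (rule sum.shift_bounds_nat_ivl)
  also have "\<dots> = (\<Sum>r<L. C * ((1+fps_X^L)*(T0 r + T1 r) - D r))"
    by (simp add: atLeast0LessThan s)
  also have "\<dots> = C * (\<Sum>r<L. (1+fps_X^L)*(T0 r + T1 r) - D r)"
    by (simp add: sum_distrib_left)
  also have "(\<Sum>r<L. (1+fps_X^L)*(T0 r + T1 r) - D r) = (1+fps_X^L)*((\<Sum>r<L. T0 r) + (\<Sum>r<L. T1 r)) - (\<Sum>r<L. D r)"
    by (simp add: sum_subtractf sum.distrib sum_distrib_left distrib_left)
  finally have lhs: "(\<Sum>m\<in>{L..<2*L}. summand f g m) = C * ((1+fps_X^L)*((\<Sum>r<L. T0 r) + (\<Sum>r<L. T1 r)) - (\<Sum>r<L. D r))" .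
  have w2: "W (2*L) f g = C * (1+fps_X^L) * ((\<Sum>r<L. T0 r) + (\<Sum>r<L. T1 r))"
  proof -
    have xx: "(fps_X^(2*L) :: 'a fps) = fps_X^L * fps_X^L" by (simp add: mult_2 power_add)
    have fact: "(1 - fps_X^(2*L) :: 'a fps) = (1 - fps_X^L) * (1 + fps_X^L)"
      unfolding xx by (simp add: algebra_simps)
    have "W (2*L) f g = (1 - fps_X^(2*L)) * fps_geom 1 * ((\<Sum>r<L. T0 r) + (\<Sum>r<L. T1 r))"
      unfolding W_def T0_def T1_def by (simp only: sum_split2)
    also have "(1 - fps_X^(2*L)) * (fps_geom 1 :: 'a fps) = C * (1+fps_X^L)"
      unfolding fact C_def by (simp only: ac_simps)
    finally show ?thesis .
  qed
  have w1: "W L f g = C * (\<Sum>r<L. D r)" unfolding W_def C_def D_def by simp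
  show ?thesis unfolding lhs w1 w2 by (simp add: algebra_simps)
qed

lemma tele:
  fixes f g :: "'a::comm_ring_1 fps"
  shows "(\<Sum>m\<in>{1..<2^K}. summand f g m) = W (2^K) f g - W 1 f g"
proof (induction K)
  case 0 then show ?case by simp
next
  case (Suc K)
  have "(\<Sum>m\<in>{1..<2^Suc K}. summand f g m) = (\<Sum>m\<in>{1..<2^K}. summand f g m) + (\<Sum>m\<in>{2^K..<2*2^K}. summand f g m)"
    by (simp add: sum.atLeastLessThan_concat)
  also have "\<dots> = W (2^Suc K) f g - W 1 f g"
    unfolding Suc level[OF refl] by simp
  finally show ?case .
qed

lemma geom_nth [simp]: "(fps_geom N :: 'a::comm_ring_1 fps) $ n = (if N dvd n then 1 else 0)"
  unfolding fps_geom_def by simp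

lemma geom1_nth: "(fps_geom 1 :: 'a::comm_ring_1 fps) $ n = 1"
  by simp

lemma geomc [simp]: "(((1 - fps_X^M) * fps_geom (Suc 0)) :: 'a::comm_ring_1 fps) $ i = (if i < M then 1 else 0)"
proof -
  have "((1 - fps_X^M) * fps_geom (Suc 0) :: 'a fps) = fps_geom (Suc 0) - fps_X^M * fps_geom (Suc 0)" by (simp add: algebra_simps)
  then show ?thesis by (simp add: fps_X_power_mult_nth geom1_nth)
qed

lemma W1: "W 1 f g = f * g"
proof -
  have c0: "((1 - fps_X) * fps_geom (Suc 0) :: 'a fps) = fps_geom (Suc 0) - fps_X * fps_geom (Suc 0)"
    by (simp add: algebra_simps)
  have c: "((1 - fps_X^1) * fps_geom 1 :: 'a fps) = 1"
  proof (intro fps_ext)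
    fix n
    have "((1 - fps_X^1) * fps_geom (Suc 0) :: 'a fps) $ n = (if n < 1 then 1 else 0)" by (rule geomc)
    then show "((1 - fps_X^1) * fps_geom 1 :: 'a fps) $ n = 1 $ n" by simp
  qed
  have p: "Pr 1 0 h = h" for h :: "'a fps" unfolding Pr_def by (intro fps_ext) simp
  have p': "Pr (Suc 0) 0 h = h" for h :: "'a fps" unfolding Pr_def by (intro fps_ext) simp
  show ?thesis unfolding W_def c p by (simp add: p')
qed

lemma Pr_prod_nth:
  fixes f g :: "'a::comm_ring_1 fps"
  assumes r: "r < M" and j: "j < M"
  shows "(Pr M r f * Pr M r g) $ (j+r) = (if j = r then f$r * g$r else 0)"
proof -
  have t: "Pr M r f $ i * Pr M r g $ (j + r - i) = (if i = r then (if j = r then f$r * g$r else 0) else 0)"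
    if i: "i \<le> j + r" for i
  proof (cases "i = r")
    case True
    then show ?thesis unfolding Pr_def using r j by simp
  next
    case False
    have "i mod M \<noteq> r"
    proof
      assume h: "i mod M = r"
      have "M * (i div M) + i mod M = i" by (rule mult_div_mod_eq)
      then have e: "i = M * (i div M) + r" using h by simp
      then have "M * (i div M) < M * 1" using i j by linarith
      then have "i div M = 0" by simp
      then show False using e False by simp
    qed
    then show ?thesis unfolding Pr_def using False by simp
  qed
  have "(Pr M r f * Pr M r g) $ (j+r) = (\<Sum>i=0..j+r. Pr M r f $ i * Pr M r g $ (j + r - i))"
    by (rule fps_mult_nth)
  also have "\<dots> = (\<Sum>i=0..j+r. (if i = r then (if j = r then f$r * g$r else 0) else 0))"
    by (rule sum.cong) (use t in auto)
  also have "\<dots> = (if j = r then f$r * g$r else 0)" by simp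
  finally show ?thesis .
qed

lemma W_nth:
  fixes f g :: "'a::comm_ring_1 fps"
  assumes n: "n < M"
  shows "W M f g $ n = (fps_hadamard f g * fps_geom 1) $ n"
proof -
  define H where "H = (\<Sum>r<M. fps_shift r (Pr M r f * Pr M r g))"
  have Hj: "H $ j = f$j * g$j" if j: "j < M" for j
  proof -
    have "H $ j = (\<Sum>r<M. (Pr M r f * Pr M r g) $ (j + r))" unfolding H_def by (simp add: fps_sum_nth)
    also have "\<dots> = (\<Sum>r<M. (if j = r then f$r * g$r else 0))"
      by (rule sum.cong[OF refl]) (simp add: Pr_prod_nth[OF _ j])
    also have "\<dots> = f$j * g$j" using j by simp
    finally show ?thesis .
  qed
  have "W M f g = H * ((1 - fps_X^M) * fps_geom 1)" unfolding W_def H_def by (simp add: mult.commute)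
  then have "W M f g $ n = (\<Sum>i=0..n. H $ i * ((1 - fps_X^M) * fps_geom 1) $ (n - i))"
    by (simp add: fps_mult_nth)
  also have "\<dots> = (\<Sum>i=0..n. fps_hadamard f g $ i * fps_geom 1 $ (n - i))"
    by (rule sum.cong) (use n Hj in \<open>auto simp: geomc geom1_nth fps_hadamard_def\<close>)
  also have "\<dots> = (fps_hadamard f g * fps_geom 1) $ n" by (simp add: fps_mult_nth)
  finally show ?thesis .
qed

lemma low_U: "low m (U_ser m f)"
  unfolding low_def U_ser_def fps_hadamard_def by (simp add: fps_X_power_mult_nth)

lemma summand_nth0: "n < m \<Longrightarrow> summand f g m $ n = 0"
proof -
  assume n: "n < m"
  have "low (0 + m) (summand f g m)"
    unfolding summand_def
    by (rule low_mult[OF low_0 low_shift]) (use low_mult[OF low_U[of m f] low_U[of m g]] in simp)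
  then show ?thesis using n unfolding low_def by simp
qed

theorem mainTheorem3:
  fixes f g :: "'a::comm_ring_1 fps"
  shows "(\<lambda>n. summand f g (Suc n)) sums (fps_hadamard f g * fps_geom 1 - f * g)
         \<and> f * g = fps_hadamard f g * fps_geom 1 - (\<Sum>n. summand f g (Suc n))"
proof -
  have S: "(\<lambda>n. summand f g (Suc n)) sums (fps_hadamard f g * fps_geom 1 - f * g)"
    unfolding sums_def
  proof (rule tendsto_fpsI)
    fix n
    have nK: "n < 2^n" by (rule less_exp)
    show "eventually (\<lambda>N::nat. (\<Sum>i<N. summand f g (Suc i)) $ n = (fps_hadamard f g * fps_geom 1 - f * g) $ n) sequentially"
      unfolding eventually_sequentially
    proof (intro exI allI impI)
      fix N :: nat assume N: "2^n \<le> N"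
      have "(\<Sum>m\<in>{Suc 0..<Suc N}. summand f g m) = (\<Sum>i\<in>{0..<N}. summand f g (Suc i))"
        by (rule sum.shift_bounds_Suc_ivl)
      then have "(\<Sum>i<N. summand f g (Suc i)) = (\<Sum>m\<in>{Suc 0..<Suc N}. summand f g m)"
        by (simp add: atLeast0LessThan)
      also have "\<dots> = (\<Sum>m\<in>{1..<2^n}. summand f g m) + (\<Sum>m\<in>{2^n..<Suc N}. summand f g m)"
        using N sum.atLeastLessThan_concat[of 1 "2^n" "Suc N" "summand f g"] by simp
      finally have e0: "(\<Sum>i<N. summand f g (Suc i)) = (\<Sum>m\<in>{1..<2^n}. summand f g m) + (\<Sum>m\<in>{2^n..<Suc N}. summand f g m)" .
      have e: "(\<Sum>i<N. summand f g (Suc i)) = W (2^n) f g - W 1 f g + (\<Sum>m\<in>{2^n..<Suc N}. summand f g m)"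
        by (simp only: e0 tele)
      have z: "(\<Sum>m\<in>{2^n..<Suc N}. summand f g m) $ n = 0"
        unfolding fps_sum_nth
      proof (rule sum.neutral, rule ballI, rule summand_nth0)
        fix x assume "x \<in> {2^n..<Suc N}"
        then have "2^n \<le> x" by simp
        then show "n < x" using nK by linarith
      qed
      show "(\<Sum>i<N. summand f g (Suc i)) $ n = (fps_hadamard f g * fps_geom 1 - f * g) $ n"
        unfolding e W1 using z W_nth[OF nK, of f g] by simp
    qed
  qed
  then have "(\<Sum>n. summand f g (Suc n)) = fps_hadamard f g * fps_geom 1 - f * g"
    by (simp add: sums_unique[symmetric])
  then show ?thesis using S by simp
qed

end
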